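(* Let $S$ be a virtual flat biquandle and $C_n(S)$ the free abelian group on $n$-tuples of elements of $S$. Define $d_n:C_n(S)\to C_{n-1}(S)$ by $$d_n(a_1,\dots,a_n)=\sum_{i=1}^{n-1}(-1)^i\big((a_1,\dots,\widehat{a_i},\dots,a_n)-(a_1,\dots,\widehat{a_i},\dots,a_{n-1},a_n\circ a_i)\big),$$ where $\widehat{a_i}$ denotes omission of $a_i$. Then $d_{n-1}\circ d_n=0$ for all $n$.
   Context: A virtual flat biquandle is a set $S$ with two binary operations $a\ast b$, $a\circ b$; writing $S_b(a)=a\ast b$, $T_b(a)=a\circ b$, for all $a,b\in S$: (1) $S_aS_b=S_bS_a$, $T_aT_b=T_bT_a$, $S_aT_b=T_bS_a$; (2) $S_a=S_{T_b(a)}=S_{S_b(a)}$, $T_a=T_{S_b(a)}=T_{T_b(a)}$; (3) $T_aS_a=S_aT_a=\mathrm{id}$. *)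

theory Defs
  imports "HOL-Library.Poly_Mapping"
begin

text \<open>A virtual flat biquandle on the carrier type 'a, with S_b(a) = star a b and
  T_b(a) = circ a b.  Axioms (1)-(3), written pointwise.\<close>
definition virtual_flat_biquandle :: "('a \<Rightarrow> 'a \<Rightarrow> 'a) \<Rightarrow> ('a \<Rightarrow> 'a \<Rightarrow> 'a) \<Rightarrow> bool" where
  "virtual_flat_biquandle star circ \<longleftrightarrow>
     (\<forall>a b x. star (star x b) a = star (star x a) b) \<and>
     (\<forall>a b x. circ (circ x b) a = circ (circ x a) b) \<and>
     (\<forall>a b x. star (circ x b) a = circ (star x a) b) \<and>
     (\<forall>a b x. star x a = star x (circ a b) \<and> star x a = star x (star a b)) \<and>
     (\<forall>a b x. circ x a = circ x (star a b) \<and> circ x a = circ x (circ a b)) \<and>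
     (\<forall>a x. circ (star x a) a = x \<and> star (circ x a) a = x)"

definition chains :: "nat \<Rightarrow> ('a list \<Rightarrow>\<^sub>0 int) set" where
  "chains n = {c. Poly_Mapping.keys c \<subseteq> {as. length as = n}}"

text \<open>The boundary on a generator (a_1,...,a_n), n = length as; a_i = as ! (i-1).\<close>
definition vfb_bd_gen :: "('a \<Rightarrow> 'a \<Rightarrow> 'a) \<Rightarrow> 'a list \<Rightarrow> ('a list \<Rightarrow>\<^sub>0 int)" where
  "vfb_bd_gen circ as =
     (\<Sum>i\<in>{1..length as - 1}.
        frag_cmul ((-1) ^ i)
          (frag_of (take (i - 1) as @ drop i as)
           - frag_of (take (i - 1) as @ drop i (butlast as) @ [circ (last as) (as ! (i - 1))])))"

definition vfb_bd :: "('a \<Rightarrow> 'a \<Rightarrow> 'a) \<Rightarrow> ('a list \<Rightarrow>\<^sub>0 int) \<Rightarrow> ('a list \<Rightarrow>\<^sub>0 int)" where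
  "vfb_bd circ = frag_extend (vfb_bd_gen circ)"

end

theory Submission imports Defs begin

definition dl :: "nat \<Rightarrow> 'a list \<Rightarrow> 'a list" where
  "dl i xs = take i xs @ drop (Suc i) xs"
definition md :: "('a \<Rightarrow> 'a \<Rightarrow> 'a) \<Rightarrow> nat \<Rightarrow> 'a list \<Rightarrow> 'a list" where
  "md circ i xs = take i xs @ drop (Suc i) (butlast xs) @ [circ (last xs) (xs ! i)]"

lemma decomp:
  assumes "i \<le> j" "Suc (Suc j) < length xs"
  shows "\<exists>ys a zs b ws x. xs = ys @ a # zs @ b # ws @ [x] \<and> length ys = i \<and> length zs = j - i"
proof -
  define ys where "ys = take i xs"
  define a where "a = xs ! i"
  define r where "r = drop (Suc i) xs"
  define zs where "zs = take (j - i) r"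
  define b where "b = r ! (j - i)"
  define ws' where "ws' = drop (Suc (j - i)) r"
  have i: "i < length xs" using assms by simp
  have 1: "xs = ys @ a # r" unfolding ys_def a_def r_def using id_take_nth_drop[OF i] .
  have lr: "length r = length xs - Suc i" unfolding r_def by simp
  have ji: "j - i < length r" using lr assms by simp
  have 2: "r = zs @ b # ws'" unfolding zs_def b_def ws'_def using id_take_nth_drop[OF ji] .
  have lw: "ws' \<noteq> []" unfolding ws'_def using assms lr by simp
  have 3: "butlast ws' @ [last ws'] = ws'" using append_butlast_last_id[OF lw] .
  have A: "xs = ys @ a # zs @ b # ws'" using 1 2 by simp
  have B: "xs = ys @ a # zs @ b # butlast ws' @ [last ws']" using A by (simp only: 3)
  have l1: "length ys = i" unfolding ys_def using i by simp
  have l2: "length zs = j - i" unfolding zs_def using ji by simp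
  show ?thesis using B l1 l2 by blast
qed

lemma ids:
  assumes comm: "\<And>x a b. circ (circ x a) b = circ (circ x b) a"
    and "i \<le> j" "Suc (Suc j) < length xs"
  shows "dl j (dl i xs) = dl i (dl (Suc j) xs)"
    "md circ j (dl i xs) = dl i (md circ (Suc j) xs)"
    "dl j (md circ i xs) = md circ i (dl (Suc j) xs)"
    "md circ j (md circ i xs) = md circ i (md circ (Suc j) xs)"
proof -
  obtain ys a zs b ws x where xs: "xs = ys @ a # zs @ b # ws @ [x]" and l: "length ys = i" "length zs = j - i"
    using decomp[OF assms(2,3)] by blast
  have jj: "j = i + length zs" using l assms(2) by simp
  show "dl j (dl i xs) = dl i (dl (Suc j) xs)"
    "md circ j (dl i xs) = dl i (md circ (Suc j) xs)"
    "dl j (md circ i xs) = md circ i (dl (Suc j) xs)"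
    "md circ j (md circ i xs) = md circ i (md circ (Suc j) xs)"
    unfolding xs jj dl_def md_def using l
    by (simp_all add: nth_append butlast_append comm)
qed

lemma cancel:
  fixes F :: "nat \<Rightarrow> nat \<Rightarrow> 'b::ab_group_add"
  assumes "\<And>i j. i \<le> j \<Longrightarrow> j < m \<Longrightarrow> F i j = F (Suc j) i"
  shows "(\<Sum>i<Suc m. \<Sum>j<m. (if even (i+j) then F i j else - F i j)) = 0"
  using assms
proof (induction m)
  case 0 then show ?case by simp
next
  case (Suc m)
  let ?t = "\<lambda>i j. (if even (i+j) then F i j else - F i j)"
  have IH: "(\<Sum>i<Suc m. \<Sum>j<m. ?t i j) = 0" using Suc by simp
  have "(\<Sum>i<Suc (Suc m). \<Sum>j<Suc m. ?t i j) = (\<Sum>i<Suc (Suc m). (\<Sum>j<m. ?t i j) + ?t i m)"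
    by simp
  also have "\<dots> = (\<Sum>i<Suc (Suc m). \<Sum>j<m. ?t i j) + (\<Sum>i<Suc (Suc m). ?t i m)"
    by (simp add: sum.distrib)
  also have "(\<Sum>i<Suc (Suc m). \<Sum>j<m. ?t i j) = (\<Sum>j<m. ?t (Suc m) j)"
    using sum.lessThan_Suc[of "\<lambda>i. \<Sum>j<m. ?t i j" "Suc m"] IH by simp
  also have "(\<Sum>i<Suc (Suc m). ?t i m) = (\<Sum>i<m. ?t i m) + (?t m m + ?t (Suc m) m)"
    by simp
  also have "?t m m + ?t (Suc m) m = 0" using Suc.prems[of m m] by simp
  also have "(\<Sum>i<m. ?t i m) = (\<Sum>i<m. - ?t (Suc m) i)"
    by (rule sum.cong) (use Suc.prems in auto)
  finally show ?case by (simp add: sum_negf)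
qed

lemma sum_shift1: "(\<Sum>i\<in>{1..m}. f i) = (\<Sum>k<m. f (Suc k))"
  by (induct m) (auto simp: atLeastAtMostSuc_conv add.commute)

lemma gen_alt:
  "vfb_bd_gen circ as = (\<Sum>k<length as - 1. frag_cmul ((-1) ^ (Suc k))
      (frag_of (dl k as) - frag_of (md circ k as)))"
  unfolding vfb_bd_gen_def sum_shift1 dl_def md_def by simp

lemma len_dl: "k < length xs \<Longrightarrow> length (dl k xs) = length xs - 1"
  by (simp add: dl_def)
lemma len_md: "Suc k < length xs \<Longrightarrow> length (md circ k xs) = length xs - 1"
  by (simp add: md_def)

lemma cmul_diff: "frag_cmul c (a - b) = frag_cmul c a - frag_cmul c b"
  by (rule poly_mapping_eqI) (simp add: lookup_minus algebra_simps)

lemma cmul_sign: "frag_cmul ((-1) ^ p) x = (if even p then x else - x)"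
  by simp

lemma gen_dd:
  assumes comm: "\<And>x a b. circ (circ x a) b = circ (circ x b) a"
  shows "vfb_bd circ (vfb_bd_gen circ as) = 0"
proof (cases "length as < 2")
  case True
  then show ?thesis by (simp add: gen_alt vfb_bd_def)
next
  case False
  define m where "m = length as - 2"
  have n: "length as - 1 = Suc m" using False m_def by simp
  define F where "F i j = frag_of (dl j (dl i as)) - frag_of (md circ j (dl i as))
      - frag_of (dl j (md circ i as)) + frag_of (md circ j (md circ i as))" for i j
  have L: "length (dl i as) - 1 = m" "length (md circ i as) - 1 = m" if "i < Suc m" for i
    using that n len_dl[of i as] len_md[of i as circ] by auto
  have "vfb_bd circ (vfb_bd_gen circ as) = (\<Sum>i<Suc m. frag_cmul ((-1) ^ Suc i)
        (vfb_bd_gen circ (dl i as) - vfb_bd_gen circ (md circ i as)))"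
    unfolding gen_alt[of circ as] n vfb_bd_def
    by (simp del: sum.lessThan_Suc add: frag_extend_sum frag_extend_cmul frag_extend_diff o_def)
  also have "\<dots> = (\<Sum>i<Suc m. \<Sum>j<m. (if even (i+j) then F i j else - F i j))"
  proof (rule sum.cong[OF refl])
    fix i assume i: "i \<in> {..<Suc m}"
    show "frag_cmul ((-1) ^ Suc i) (vfb_bd_gen circ (dl i as) - vfb_bd_gen circ (md circ i as))
        = (\<Sum>j<m. (if even (i+j) then F i j else - F i j))"
      unfolding gen_alt[of circ "dl i as"] gen_alt[of circ "md circ i as"] L[OF i[simplified]]
        sum_subtractf[symmetric] frag_cmul_sum
    proof (rule sum.cong[OF refl])
      fix j
      have e: "(-1::int) ^ Suc i * (-1) ^ Suc j = (-1) ^ (i+j)"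
        by (simp add: power_add)
      show "frag_cmul ((- 1) ^ Suc i)
          (frag_cmul ((- 1) ^ Suc j) (frag_of (dl j (dl i as)) - frag_of (md circ j (dl i as))) -
           frag_cmul ((- 1) ^ Suc j) (frag_of (dl j (md circ i as)) - frag_of (md circ j (md circ i as))))
          = (if even (i+j) then F i j else - F i j)"
        unfolding cmul_diff[symmetric] frag_cmul_cmul e cmul_sign F_def by simp
    qed
  qed
  also have "\<dots> = 0"
  proof (rule cancel)
    fix i j assume "i \<le> j" "j < m"
    then have h: "Suc (Suc j) < length as" using n by simp
    show "F i j = F (Suc j) i"
      unfolding F_def ids[of circ, OF comm \<open>i \<le> j\<close> h] by (simp only: diff_right_commute)
  qed
  finally show ?thesis .
qed

theorem lemma5p3:
  fixes star circ :: "'a \<Rightarrow> 'a \<Rightarrow> 'a"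
  assumes "virtual_flat_biquandle star circ"
    and "c \<in> chains n"
  shows "vfb_bd circ (vfb_bd circ c) = 0"
proof -
  have comm: "\<And>x a b. circ (circ x a) b = circ (circ x b) a"
    using assms(1) unfolding virtual_flat_biquandle_def by blast
  have "Poly_Mapping.keys c \<subseteq> UNIV" by simp
  then show ?thesis
  proof (induction c rule: frag_induction)
    case zero then show ?case by (simp add: vfb_bd_def)
  next
    case (one x) then show ?case using gen_dd[of circ, OF comm] by (simp add: vfb_bd_def)
  next
    case (diff a b) then show ?case by (simp add: vfb_bd_def frag_extend_diff)
  qed
qed

end
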